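(* Let $0<q\leq 1$, let $D\in\mathbb{R}^{n\times d}$ be a frame with frame bounds $0<\mathcal{L}\leq\mathcal{U}<\infty$, $\kappa=\mathcal{U}/\mathcal{L}$, let $A\in\mathbb{R}^{m\times n}$, and let $s<a$ be positive integers. Assume $A$ satisfies the $(D^{\dagger},q)$-RIP of order $s+a$ (with constants $\delta_a$ and $\delta_{s+a}<1$), and let $\Delta=\frac{1+\delta_a}{1-\delta_{s+a}}$. Let $h\in\mathbb{R}^n$ be arbitrary with associated index sets $T=T_0,T_1,\dots$ and $T_{01}=T_0\cup T_1$ as in the context. Then $$\|D_{T_{01}}^*h\|_2^{q}\leq 2^{-q/2}\left(1+\sqrt{1+4\kappa^{-2}\Delta^{-2/q}}\right)^{q/2}\kappa^q\Delta\, a^{q/2-1}\left(\|D_{T^c}^*h\|_q^q+\frac{\mathcal{L}^{q/2}a^{1-q/2}\|Ah\|_q^q}{1+\delta_a}\right).$$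
   Context: $D$ is a frame with frame bounds $\mathcal{L},\mathcal{U}$ if $\mathcal{L}\|f\|_2^2\leq\|D^*f\|_2^2\leq\mathcal{U}\|f\|_2^2$ for all $f\in\mathbb{R}^n$; $D^{\dagger}=(DD^* )^{-1}D$. $A$ obeys the $(D^\dagger,q)$-RIP of order $k$ with constant $\delta\in[0,1)$ if $(1-\delta)\|D^\dagger v\|_2^q\leq\|AD^\dagger v\|_q^q\leq(1+\delta)\|D^\dagger v\|_2^q$ for all $v\in\mathbb{R}^d$ with at most $k$ nonzero entries; $\delta_k$ is the smallest such $\delta$. Index sets: write $D^*h=(x_1,\dots,x_d)^T$, reorder so that $|x_1|\geq\cdots\geq|x_d|$; $T=T_0=\{1,\dots,s\}$, $T_1=\{s+1,\dots,s+a\}$, $T_i=\{s+(i-1)a+1,\dots,s+ia\}$ for $i\geq2$ (last possibly smaller), $T_{01}=T_0\cup T_1$, $T^c=[d]\setminus T$. For $S\subset[d]$, $D_S^*h$ denotes $D^*h$ restricted to $S$ (entries outside $S$ set to zero). *)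

theory Defs
  imports "HOL-Analysis.Analysis"
begin

definition qnorm_q :: "real \<Rightarrow> real ^ 'i \<Rightarrow> real" where
  "qnorm_q q x = (\<Sum>i\<in>UNIV. \<bar>x $ i\<bar> powr q)"

definition is_frame :: "real ^ 'd ^ 'n \<Rightarrow> real \<Rightarrow> real \<Rightarrow> bool" where
  "is_frame D L U \<longleftrightarrow>
     (\<forall>f. L * (norm f)^2 \<le> (norm (transpose D *v f))^2 \<and>
          (norm (transpose D *v f))^2 \<le> U * (norm f)^2)"

definition dagger :: "real ^ 'd ^ 'n \<Rightarrow> real ^ 'd ^ 'n" where
  "dagger D = matrix_inv (D ** transpose D) ** D"

definition dq_rip :: "real ^ 'n ^ 'm \<Rightarrow> real ^ 'd ^ 'n \<Rightarrow> real \<Rightarrow> nat \<Rightarrow> real \<Rightarrow> bool" where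
  "dq_rip A D q k \<delta> \<longleftrightarrow> 0 \<le> \<delta> \<and> \<delta> < 1 \<and>
     (\<forall>v :: real ^ 'd. card {i. v $ i \<noteq> 0} \<le> k \<longrightarrow>
        (1 - \<delta>) * norm (dagger D *v v) powr q \<le> qnorm_q q (A *v (dagger D *v v)) \<and>
        qnorm_q q (A *v (dagger D *v v)) \<le> (1 + \<delta>) * norm (dagger D *v v) powr q)"

definition rip_const :: "real ^ 'n ^ 'm \<Rightarrow> real ^ 'd ^ 'n \<Rightarrow> real \<Rightarrow> nat \<Rightarrow> real" where
  "rip_const A D q k = Inf {\<delta>. dq_rip A D q k \<delta>}"

text \<open>D_S^* h: the vector D^* h with entries outside S set to zero.\<close>
definition restr_analysis :: "real ^ 'd ^ 'n \<Rightarrow> 'd set \<Rightarrow> real ^ 'n \<Rightarrow> real ^ 'd" where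
  "restr_analysis D S h = (\<chi> i. if i \<in> S then (transpose D *v h) $ i else 0)"

end

theory Submission
  imports Defs
begin

definition blk :: "nat \<Rightarrow> nat \<Rightarrow> nat \<Rightarrow> nat \<Rightarrow> nat set" where
  "blk s a n k = {s + k * a + 1 .. min (s + (Suc k) * a) n}"

lemma blk0: "blk s a n 0 = {s + 1 .. min (s + a) n}"
  unfolding blk_def by simp

lemma blk_sub: "blk s a n k \<subseteq> {s + 1 .. n}"
  unfolding blk_def by auto

lemma blk_card: "card (blk s a n k) \<le> a"
  unfolding blk_def by simp

lemma blk_disj:
  assumes "k \<noteq> k'"
  shows "blk s a n k \<inter> blk s a n k' = {}"
proof -
  have *: "blk s a n k \<inter> blk s a n k' = {}" if "k < k'" for k k'
  proof -
    have "Suc k * a \<le> k' * a" using that by (intro mult_le_mono1) simp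
    then show ?thesis unfolding blk_def by auto
  qed
  show ?thesis using assms *[of k k'] *[of k' k] by (cases "k < k'") (auto simp: Int_commute)
qed

lemma blk_head_disj: "{1..min s n} \<inter> blk s a n k = {}"
  unfolding blk_def by auto

lemma blk_cover:
  assumes "0 < a" "p \<in> {1..n}"
  shows "p \<in> {1..min s n} \<union> blk s a n 0 \<union> (\<Union>j<n. blk s a n (Suc j))"
proof (cases "p \<le> s + a")
  case True
  then show ?thesis using assms unfolding blk_def by auto
next
  case False
  define k where "k = (p - s - 1) div a"
  define r where "r = (p - s - 1) mod a"
  have pr: "p - s - 1 = k * a + r" unfolding k_def r_def by simp
  have ra: "r < a" unfolding r_def using assms by simp
  have k1: "k \<noteq> 0"
  proof
    assume "k = 0" then have "p - s - 1 < a" using pr ra by simp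
    then show False using False by simp
  qed
  then obtain j where kj: "k = Suc j" by (cases k) auto
  have "k \<le> k * a" using assms by simp
  also have "k * a < n" using pr assms False by auto
  finally have jn: "j < n" using kj by simp
  have "p \<in> blk s a n (Suc j)"
    unfolding blk_def using pr ra assms False kj by (auto simp: algebra_simps)
  then show ?thesis using jn by blast
qed

lemma blk_prev:
  assumes "blk s a n (Suc j) \<noteq> {}" "0 < a"
  shows "blk s a n j = {s + j * a + 1 .. s + Suc j * a}" "card (blk s a n j) = a"
    "\<And>p p'. p \<in> blk s a n (Suc j) \<Longrightarrow> p' \<in> blk s a n j \<Longrightarrow> p' \<le> p"
proof -
  have "s + Suc j * a + 1 \<le> n" using assms(1) unfolding blk_def by auto
  then show e: "blk s a n j = {s + j * a + 1 .. s + Suc j * a}" unfolding blk_def by auto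
  show "card (blk s a n j) = a" unfolding e by simp
  show "\<And>p p'. p \<in> blk s a n (Suc j) \<Longrightarrow> p' \<in> blk s a n j \<Longrightarrow> p' \<le> p"
    unfolding e unfolding blk_def by auto
qed


lemma inner_transpose: "inner f (D *v y) = inner (transpose D *v f) (y::real^_)"
  by (simp add: dot_lmul_matrix[symmetric])

lemma frame_inv:
  fixes D :: "real ^ 'd ^ 'n"
  assumes "is_frame D L U" "0 < L"
  shows "(D ** transpose D) ** matrix_inv (D ** transpose D) = mat 1 \<and>
         matrix_inv (D ** transpose D) ** (D ** transpose D) = mat 1"
proof -
  let ?G = "D ** transpose D"
  have "\<forall>f. ?G *v f = 0 \<longrightarrow> f = 0"
  proof (intro allI impI)
    fix f assume f0: "?G *v f = 0"
    have "inner f (?G *v f) = inner (transpose D *v f) (transpose D *v f)"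
      by (simp only: matrix_vector_mul_assoc[symmetric] inner_transpose)
    also have "\<dots> = (norm (transpose D *v f))^2" by (simp add: power2_norm_eq_inner)
    finally have "(norm (transpose D *v f))^2 = 0" using f0 by simp
    moreover have "L * (norm f)^2 \<le> (norm (transpose D *v f))^2"
      using assms(1) unfolding is_frame_def by blast
    ultimately have "L * (norm f)^2 \<le> 0" by simp
    with assms(2) have "(norm f)^2 \<le> 0" by (simp add: mult_le_0_iff)
    then show "f = 0" by simp
  qed
  then have "invertible ?G" using invertible_left_inverse matrix_left_invertible_ker by blast
  then show ?thesis unfolding invertible_def matrix_inv_def by (rule someI_ex)
qed

lemma dagger_DT:
  fixes D :: "real ^ 'd ^ 'n"
  assumes "is_frame D L U" "0 < L"
  shows "dagger D *v (transpose D *v h) = h"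
  using frame_inv[OF assms]
  by (simp add: dagger_def matrix_vector_mul_assoc matrix_mul_assoc del: transpose_matrix_vector)

lemma G_dagger:
  fixes D :: "real ^ 'd ^ 'n"
  assumes "is_frame D L U" "0 < L"
  shows "(D ** transpose D) *v (dagger D *v v) = D *v v"
proof -
  let ?G = "D ** transpose D"
  have "?G *v (dagger D *v v) = (?G ** (matrix_inv ?G ** D)) *v v"
    unfolding dagger_def by (simp only: matrix_vector_mul_assoc)
  also have "\<dots> = ((?G ** matrix_inv ?G) ** D) *v v" by (simp only: matrix_mul_assoc)
  also have "\<dots> = D *v v" using frame_inv[OF assms] by simp
  finally show ?thesis .
qed

lemma dagger_bound:
  fixes D :: "real ^ 'd ^ 'n"
  assumes "is_frame D L U" "0 < L"
  shows "L * (norm (dagger D *v v))^2 \<le> (norm v)^2"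
proof -
  define y where "y = dagger D *v v"
  have "(norm (transpose D *v y))^2 = inner y ((D ** transpose D) *v y)"
    by (simp only: matrix_vector_mul_assoc[symmetric] inner_transpose power2_norm_eq_inner)
  also have "\<dots> = inner y (D *v v)" using G_dagger[OF assms] y_def by simp
  also have "\<dots> = inner (transpose D *v y) v" by (rule inner_transpose)
  also have "\<dots> \<le> norm (transpose D *v y) * norm v" by (rule norm_cauchy_schwarz)
  finally have 1: "(norm (transpose D *v y))^2 \<le> norm (transpose D *v y) * norm v" .
  have 2: "norm (transpose D *v y) \<le> norm v"
  proof (cases "norm (transpose D *v y) = 0")
    case True then show ?thesis by simp
  next
    case False
    then have "norm (transpose D *v y) > 0" by simp
    with 1 show ?thesis by (simp add: power2_eq_square)
  qed
  have "L * (norm y)^2 \<le> (norm (transpose D *v y))^2"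
    using assms(1) unfolding is_frame_def by blast
  also have "\<dots> \<le> (norm v)^2" using 2 by (simp add: power_mono)
  finally show ?thesis using y_def by simp
qed


lemma powr_add_le:
  fixes a b q :: real
  assumes "0 \<le> a" "0 \<le> b" "0 < q" "q \<le> 1"
  shows "(a + b) powr q \<le> a powr q + b powr q"
proof (cases "a + b = 0")
  case True then show ?thesis by simp
next
  case False
  then have ab: "a + b > 0" using assms by simp
  have key: "c powr q \<ge> c * (a + b) powr (q - 1)" if "0 \<le> c" "c \<le> a + b" for c
  proof (cases "c = 0")
    case True then show ?thesis by simp
  next
    case False
    then have c: "c > 0" using that by simp
    have "(a + b) powr (q - 1) \<le> c powr (q - 1)"
      using powr_mono2'[of "q - 1" c "a + b"] c that assms by simp
    then have "c * (a + b) powr (q - 1) \<le> c * c powr (q - 1)"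
      using c by (simp add: mult_left_mono)
    also have "\<dots> = c powr q" using powr_mult_base[of c "q - 1"] c by simp
    finally show ?thesis .
  qed
  have "(a + b) powr q = (a + b) * (a + b) powr (q - 1)"
    using powr_mult_base[of "a+b" "q - 1"] ab by simp
  also have "\<dots> = a * (a + b) powr (q - 1) + b * (a + b) powr (q - 1)"
    by (simp add: algebra_simps)
  also have "\<dots> \<le> a powr q + b powr q"
    using key[of a] key[of b] assms by simp
  finally show ?thesis .
qed

lemma powr_sum_le:
  fixes f :: "'k \<Rightarrow> real" and q :: real
  assumes "finite K" "\<And>k. k \<in> K \<Longrightarrow> 0 \<le> f k" "0 < q" "q \<le> 1"
  shows "(\<Sum>k\<in>K. f k) powr q \<le> (\<Sum>k\<in>K. f k powr q)"
  using assms
proof (induction K rule: finite_induct)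
  case empty then show ?case by simp
next
  case (insert x F)
  have "(\<Sum>k\<in>insert x F. f k) powr q = (f x + (\<Sum>k\<in>F. f k)) powr q"
    using insert by simp
  also have "\<dots> \<le> f x powr q + (\<Sum>k\<in>F. f k) powr q"
    using insert by (intro powr_add_le) (auto intro: sum_nonneg)
  also have "\<dots> \<le> f x powr q + (\<Sum>k\<in>F. f k powr q)"
    using insert by simp
  finally show ?case using insert by simp
qed

lemma qnorm_q_nonneg: "0 \<le> qnorm_q q x"
  unfolding qnorm_q_def by (simp add: sum_nonneg)

lemma qnorm_q_add:
  assumes "0 < q" "q \<le> 1"
  shows "qnorm_q q (x + y) \<le> qnorm_q q x + qnorm_q q y"
proof -
  have "qnorm_q q (x + y) = (\<Sum>i\<in>UNIV. \<bar>x $ i + y $ i\<bar> powr q)"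
    unfolding qnorm_q_def by simp
  also have "\<dots> \<le> (\<Sum>i\<in>UNIV. \<bar>x $ i\<bar> powr q + \<bar>y $ i\<bar> powr q)"
  proof (rule sum_mono)
    fix i :: 'a
    have "\<bar>x $ i + y $ i\<bar> powr q \<le> (\<bar>x $ i\<bar> + \<bar>y $ i\<bar>) powr q"
      using assms by (intro powr_mono2) auto
    also have "\<dots> \<le> \<bar>x $ i\<bar> powr q + \<bar>y $ i\<bar> powr q"
      using assms by (intro powr_add_le) auto
    finally show "\<bar>x $ i + y $ i\<bar> powr q \<le> \<bar>x $ i\<bar> powr q + \<bar>y $ i\<bar> powr q" .
  qed
  also have "\<dots> = qnorm_q q x + qnorm_q q y"
    unfolding qnorm_q_def by (simp add: sum.distrib)
  finally show ?thesis .
qed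

lemma qnorm_q_uminus: "qnorm_q q (- x) = qnorm_q q x"
  unfolding qnorm_q_def by simp

lemma qnorm_q_sum:
  assumes "finite K" "0 < q" "q \<le> 1"
  shows "qnorm_q q (\<Sum>k\<in>K. z k) \<le> (\<Sum>k\<in>K. qnorm_q q (z k))"
  using assms
proof (induction K rule: finite_induct)
  case empty then show ?case by (simp add: qnorm_q_def)
next
  case (insert x F)
  then show ?case
    using qnorm_q_add[OF insert(4,5), of "z x" "\<Sum>k\<in>F. z k"] by simp
qed

lemma dq_rip_mono:
  assumes "dq_rip A D q k \<delta>" "k' \<le> k"
  shows "dq_rip A D q k' \<delta>"
  using assms unfolding dq_rip_def by auto

lemma rip_const_attained:
  assumes "\<exists>\<delta>. dq_rip A D q k \<delta>"
  shows "dq_rip A D q k (rip_const A D q k)"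
proof -
  define S where "S = {\<delta>. dq_rip A D q k \<delta>}"
  obtain \<delta>0 where d0: "\<delta>0 \<in> S" using assms S_def by auto
  have ne: "S \<noteq> {}" using d0 by auto
  have bdd: "bdd_below S" unfolding S_def dq_rip_def bdd_below_def by auto
  define c where "c = Inf S"
  have c_def': "rip_const A D q k = c" unfolding c_def S_def rip_const_def by simp
  have lb: "\<And>t. (\<And>\<delta>. \<delta> \<in> S \<Longrightarrow> t \<le> \<delta>) \<Longrightarrow> t \<le> c"
    unfolding c_def using ne by (intro cInf_greatest) auto
  have c0: "0 \<le> c" by (rule lb) (auto simp: S_def dq_rip_def)
  have c1: "c < 1"
  proof -
    have "c \<le> \<delta>0" unfolding c_def using d0 bdd by (rule cInf_lower)
    also have "\<delta>0 < 1" using d0 unfolding S_def dq_rip_def by auto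
    finally show ?thesis .
  qed
  have main: "(1 - c) * norm (dagger D *v v) powr q \<le> qnorm_q q (A *v (dagger D *v v)) \<and>
        qnorm_q q (A *v (dagger D *v v)) \<le> (1 + c) * norm (dagger D *v v) powr q"
    if v: "card {i. v $ i \<noteq> 0} \<le> k" for v
  proof -
    define N where "N = norm (dagger D *v v) powr q"
    define Q where "Q = qnorm_q q (A *v (dagger D *v v))"
    have P: "\<And>\<delta>. \<delta> \<in> S \<Longrightarrow> (1 - \<delta>) * N \<le> Q \<and> Q \<le> (1 + \<delta>) * N"
      using v unfolding S_def dq_rip_def N_def Q_def by blast
    have N0: "0 \<le> N" unfolding N_def by simp
    show ?thesis
    proof (cases "N = 0")
      case True
      then show ?thesis using P[OF d0] unfolding N_def Q_def by simp
    next
      case False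
      then have Np: "N > 0" using N0 by simp
      have "(N - Q) / N \<le> c"
      proof (rule lb)
        fix \<delta> assume "\<delta> \<in> S"
        then have "N - Q \<le> \<delta> * N" using P[of \<delta>] by (simp add: algebra_simps)
        then show "(N - Q) / N \<le> \<delta>" using Np by (simp add: divide_le_eq)
      qed
      then have 1: "N - Q \<le> c * N" using Np by (simp add: divide_le_eq)
      have "(Q - N) / N \<le> c"
      proof (rule lb)
        fix \<delta> assume "\<delta> \<in> S"
        then have "Q - N \<le> \<delta> * N" using P[of \<delta>] by (simp add: algebra_simps)
        then show "(Q - N) / N \<le> \<delta>" using Np by (simp add: divide_le_eq)
      qed
      then have 2: "Q - N \<le> c * N" using Np by (simp add: divide_le_eq)
      show ?thesis using 1 2 unfolding N_def[symmetric] Q_def[symmetric] by (auto simp: algebra_simps)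
    qed
  qed
  show ?thesis unfolding c_def' dq_rip_def using c0 c1 main by blast
qed


lemma powr2_sq: "0 \<le> (z::real) \<Longrightarrow> z powr 2 = z^2"
  by (cases "z = 0") (simp_all add: powr_realpow[of z 2, simplified])

lemma sq_from_powr:
  fixes z B q :: real
  assumes "0 < q" "0 \<le> z" "z powr q \<le> B"
  shows "z^2 \<le> B powr (2/q)"
proof -
  have "z^2 = (z powr q) powr (2/q)" using assms by (simp add: powr_powr powr2_sq)
  also have "\<dots> \<le> B powr (2/q)" using assms by (intro powr_mono2) auto
  finally show ?thesis .
qed

lemma final_ineq:
  fixes X W0 R M L U \<Delta> q :: real
  assumes q: "0 < q" "q \<le> 1" and LU: "0 < L" "L \<le> U" and D: "0 < \<Delta>"
    and nn: "0 \<le> X" "0 \<le> W0" "0 \<le> R" "0 \<le> M"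
    and quad: "X^2 \<le> sqrt U * W0 * sqrt (X^2 + R^2)"
    and W: "W0 powr q \<le> \<Delta> * L powr (-q/2) * M"
    and Rb: "R powr q \<le> M"
  shows "X powr q \<le> 2 powr (-q/2) * (1 + sqrt (1 + 4 * (U/L) powr (-2) * \<Delta> powr (-2/q))) powr (q/2)
           * (U/L) powr q * \<Delta> * M"
proof -
  define \<kappa> where "\<kappa> = U / L"
  have k1: "1 \<le> \<kappa>" using LU unfolding \<kappa>_def by simp
  define Z where "Z = \<Delta> powr (2/q) * M powr (2/q)"
  define M' where "M' = M powr (2/q)"
  define C where "C = \<kappa>^2 * Z"
  define t where "t = X^2"
  have Z0: "0 \<le> Z" "0 \<le> M'" unfolding Z_def M'_def by auto
  have C0: "0 \<le> C" unfolding C_def using Z0 by simp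
  have W2: "W0^2 \<le> Z / L"
  proof -
    have "W0^2 \<le> (\<Delta> * L powr (-q/2) * M) powr (2/q)" by (rule sq_from_powr[OF q(1) nn(2) W])
    also have "\<dots> = \<Delta> powr (2/q) * (L powr (-q/2)) powr (2/q) * M powr (2/q)"
      by (simp add: powr_mult)
    also have "(L powr (-q/2)) powr (2/q) = L powr (-1)" using q by (simp add: powr_powr)
    also have "L powr (-1) = 1 / L" using LU by (simp add: powr_neg_one)
    finally show ?thesis unfolding Z_def by simp
  qed
  have R2: "R^2 \<le> M'" unfolding M'_def by (rule sq_from_powr[OF q(1) nn(3) Rb])
  have c: "U * W0^2 \<le> C"
  proof -
    have "U * W0^2 \<le> U * (Z / L)" using W2 LU by (intro mult_left_mono) auto
    also have "\<dots> = \<kappa> * Z" unfolding \<kappa>_def by simp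
    also have "\<dots> \<le> \<kappa>^2 * Z" using k1 Z0 by (intro mult_right_mono) (auto simp: power2_eq_square)
    finally show ?thesis unfolding C_def .
  qed
  have t2: "t^2 \<le> C * (t + M')"
  proof -
    have "t^2 \<le> (sqrt U * W0 * sqrt (X^2 + R^2))^2"
      using quad nn unfolding t_def by (intro power_mono) auto
    also have "\<dots> = U * W0^2 * (t + R^2)" using LU unfolding t_def
      by (simp add: power_mult_distrib)
    also have "\<dots> \<le> C * (t + M')"
      using c R2 C0 unfolding t_def by (intro mult_mono) auto
    finally show ?thesis .
  qed
  define E where "E = (C + sqrt (C^2 + 4 * C * M')) / 2"
  have sqC: "C \<le> sqrt (C^2 + 4 * C * M')"
    using C0 Z0 by (intro real_le_rsqrt) auto
  have EE: "E^2 = C * E + C * M'"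
  proof -
    have s: "(sqrt (C^2 + 4 * C * M'))^2 = C^2 + 4 * C * M'" using C0 Z0 by simp
    show ?thesis unfolding E_def using s by (simp add: power2_eq_square algebra_simps)
  qed
  have tE: "t \<le> E"
  proof (rule ccontr)
    assume "\<not> t \<le> E"
    then have lt: "E < t" by simp
    have E0: "C \<le> E" unfolding E_def using sqC by simp
    have "t^2 - C * t - C * M' = (t - E) * (t + E - C)"
      using EE by (simp add: power2_eq_square algebra_simps)
    moreover have "(t - E) * (t + E - C) > 0" using lt E0 C0 by (intro mult_pos_pos) auto
    ultimately show False using t2 by (simp add: algebra_simps)
  qed
  define S where "S = sqrt (1 + 4 * \<kappa> powr (-2) * \<Delta> powr (-2/q))"
  have kp: "\<kappa> > 0" using k1 by simp
  have kk: "\<kappa> powr (-2) * \<kappa>^2 = 1"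
  proof -
    have "\<kappa> powr (-2) = 1 / \<kappa> powr 2" by (rule powr_minus_divide)
    also have "\<kappa> powr 2 = \<kappa>^2" using kp by (intro powr2_sq) simp
    finally show ?thesis using kp by simp
  qed
  have dd: "\<Delta> powr (-2/q) * \<Delta> powr (2/q) = 1"
    using D by (simp add: powr_add[symmetric])
  have CS: "sqrt (C^2 + 4 * C * M') = C * S"
  proof -
    have "C * M' = C^2 * (\<kappa> powr (-2) * \<Delta> powr (-2/q))"
    proof -
      have "C^2 * (\<kappa> powr (-2) * \<Delta> powr (-2/q)) = C * (\<kappa> powr (-2) * \<kappa>^2) * (\<Delta> powr (-2/q) * \<Delta> powr (2/q)) * M'"
        unfolding C_def Z_def M'_def by (simp add: power2_eq_square algebra_simps)
      also have "\<dots> = C * M'" by (simp only: kk dd mult_1_right)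
      finally show ?thesis by simp
    qed
    then have "C^2 + 4 * C * M' = C^2 * (1 + 4 * \<kappa> powr (-2) * \<Delta> powr (-2/q))"
      by (simp add: algebra_simps)
    then show ?thesis unfolding S_def using C0 by (simp add: real_sqrt_mult)
  qed
  have Ef: "E = C * ((1 + S) / 2)" unfolding E_def CS by (simp add: algebra_simps)
  have "X powr q = t powr (q/2)"
  proof -
    have "t = X powr 2" unfolding t_def using nn by (intro powr2_sq[symmetric]) simp
    then show ?thesis by (simp add: powr_powr)
  qed
  also have "\<dots> \<le> E powr (q/2)" using tE q unfolding t_def by (intro powr_mono2) auto
  also have "\<dots> = (\<kappa>^2) powr (q/2) * Z powr (q/2) * ((1 + S) / 2) powr (q/2)"
    unfolding Ef C_def by (simp only: powr_mult)
  also have "(\<kappa>^2) powr (q/2) = \<kappa> powr q"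
  proof -
    have "\<kappa>^2 = \<kappa> powr 2" using kp by (intro powr2_sq[symmetric]) simp
    then show ?thesis using q by (simp add: powr_powr)
  qed
  also have "Z powr (q/2) = \<Delta> * M"
  proof -
    have e: "2 / q * (q / 2) = 1" using q by simp
    have "Z powr (q/2) = \<Delta> powr (2 / q * (q / 2)) * M powr (2 / q * (q / 2))"
      unfolding Z_def by (simp only: powr_mult powr_powr)
    also have "\<dots> = \<Delta> * M" unfolding e using D nn by simp
    finally show ?thesis .
  qed
  also have "((1 + S) / 2) powr (q/2) = (1 + S) powr (q/2) * 2 powr (-q/2)"
  proof -
    have m: "2 powr (- q / 2) = 1 / 2 powr (q/2)" using powr_minus_divide[of 2 "q/2"] by simp
    have "((1 + S) / 2) powr (q/2) = (1 + S) powr (q/2) / 2 powr (q/2)" by (simp only: powr_divide)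
    then show ?thesis unfolding m by simp
  qed
  finally have fin: "X powr q \<le> \<kappa> powr q * (\<Delta> * M) * ((1 + S) powr (q / 2) * 2 powr (- q / 2))" .
  have "\<kappa> powr q * (\<Delta> * M) * ((1 + S) powr (q / 2) * 2 powr (- q / 2))
      = 2 powr (- q / 2) * (1 + S) powr (q / 2) * \<kappa> powr q * \<Delta> * M"
    by (simp only: ac_simps)
  then have "X powr q \<le> 2 powr (- q / 2) * (1 + S) powr (q / 2) * \<kappa> powr q * \<Delta> * M"
    by (rule order_trans[OF fin eq_refl])
  then show ?thesis unfolding S_def \<kappa>_def .
qed


lemma rv_nth: "restr_analysis D S h $ i = (if i \<in> S then (transpose D *v h) $ i else 0)"
  unfolding restr_analysis_def by simp

lemma rv_add:
  assumes "S \<inter> S' = {}"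
  shows "restr_analysis D (S \<union> S') h = restr_analysis D S h + restr_analysis D S' h"
  using assms by (auto simp: vec_eq_iff rv_nth)

lemma rv_empty: "restr_analysis D {} h = 0"
  by (simp add: vec_eq_iff rv_nth)

lemma rv_UNIV: "restr_analysis D UNIV h = transpose D *v h"
  by (simp add: vec_eq_iff rv_nth)

lemma rv_sum:
  assumes "finite K" "\<And>k k'. k \<in> K \<Longrightarrow> k' \<in> K \<Longrightarrow> k \<noteq> k' \<Longrightarrow> S k \<inter> S k' = {}"
  shows "(\<Sum>k\<in>K. restr_analysis D (S k) h) = restr_analysis D (\<Union>k\<in>K. S k) h"
  using assms
proof (induction K rule: finite_induct)
  case empty then show ?case by (simp add: rv_empty)
next
  case (insert x F)
  have "S x \<inter> (\<Union>k\<in>F. S k) = {}" using insert by blast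
  then show ?case using insert by (simp add: rv_add)
qed

lemma norm_sq_vec: "(norm (v::real^'i))^2 = (\<Sum>i\<in>UNIV. (v $ i)^2)"
  unfolding power2_norm_eq_inner inner_vec_def by (simp add: power2_eq_square)

lemma norm_rv: "(norm (restr_analysis D S h))^2 = (\<Sum>i\<in>S. ((transpose D *v h) $ i)^2)"
proof -
  have "(norm (restr_analysis D S h))^2 = (\<Sum>i\<in>UNIV. (restr_analysis D S h $ i)^2)"
    by (rule norm_sq_vec)
  also have "\<dots> = (\<Sum>i\<in>UNIV. if i \<in> S then ((transpose D *v h) $ i)^2 else 0)"
    by (intro sum.cong) (auto simp: rv_nth)
  also have "\<dots> = (\<Sum>i\<in>S. ((transpose D *v h) $ i)^2)"
    by (simp add: sum.If_cases)
  finally show ?thesis .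
qed

lemma qnorm_rv: "qnorm_q q (restr_analysis D S h) = (\<Sum>i\<in>S. \<bar>(transpose D *v h) $ i\<bar> powr q)"
proof -
  have "qnorm_q q (restr_analysis D S h) = (\<Sum>i\<in>UNIV. if i \<in> S then \<bar>(transpose D *v h) $ i\<bar> powr q else 0)"
    unfolding qnorm_q_def by (intro sum.cong) (auto simp: rv_nth)
  also have "\<dots> = (\<Sum>i\<in>S. \<bar>(transpose D *v h) $ i\<bar> powr q)"
    by (simp add: sum.If_cases)
  finally show ?thesis .
qed

lemma card_rv: "card {i. restr_analysis D S h $ i \<noteq> 0} \<le> card (S :: 'd::finite set)"
  by (rule card_mono) (auto simp: rv_nth)

lemma inner_rv: "inner (restr_analysis D S h) (transpose D *v h) = (norm (restr_analysis D S h))^2"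
proof -
  have "inner (restr_analysis D S h) (transpose D *v h) = (\<Sum>i\<in>UNIV. restr_analysis D S h $ i * (transpose D *v h) $ i)"
    by (simp add: inner_vec_def)
  also have "\<dots> = (\<Sum>i\<in>UNIV. (restr_analysis D S h $ i)^2)"
    by (intro sum.cong) (auto simp: rv_nth power2_eq_square)
  also have "\<dots> = (norm (restr_analysis D S h))^2"
    by (rule norm_sq_vec[symmetric])
  finally show ?thesis .
qed

lemma pyth_rv:
  assumes "S \<inter> S' = {}" "S \<union> S' = UNIV"
  shows "(norm (transpose D *v h))^2 = (norm (restr_analysis D S h))^2 + (norm (restr_analysis D S' h))^2"
proof -
  have "transpose D *v h = restr_analysis D (S \<union> S') h" using assms by (simp add: rv_UNIV)
  then have "(norm (transpose D *v h))^2 = (\<Sum>i\<in>S \<union> S'. ((transpose D *v h) $ i)^2)"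
    by (metis norm_rv)
  also have "\<dots> = (\<Sum>i\<in>S. ((transpose D *v h) $ i)^2) + (\<Sum>i\<in>S'. ((transpose D *v h) $ i)^2)"
    using assms by (intro sum.union_disjoint) auto
  finally show ?thesis by (simp add: norm_rv)
qed

lemma mv_sum: "finite K \<Longrightarrow> M *v (\<Sum>k\<in>K. z k) = (\<Sum>k\<in>K. M *v z k)"
  by (induction K rule: finite_induct) (simp_all add: matrix_vector_right_distrib)


lemma sum_reindex_sigma:
  assumes "inj_on \<sigma> {1..CARD('d)}" "P \<subseteq> {1..CARD('d)}"
  shows "(\<Sum>i\<in>(\<sigma>::nat\<Rightarrow>'d::finite) ` P. f i) = (\<Sum>p\<in>P. f (\<sigma> p))"
  using assms by (subst sum.reindex) (auto intro: inj_on_subset)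

lemma block_ineq:
  fixes q :: real and D :: "real ^ 'd ^ 'n" and \<sigma> :: "nat \<Rightarrow> 'd"
  assumes q: "0 < q" "q \<le> 1" and a: "0 < a"
    and sort_bij: "bij_betw \<sigma> {1..CARD('d)} UNIV"
    and sort_mono: "\<forall>i j. 1 \<le> i \<and> i \<le> j \<and> j \<le> CARD('d) \<longrightarrow>
                      \<bar>(transpose D *v h) $ \<sigma> j\<bar> \<le> \<bar>(transpose D *v h) $ \<sigma> i\<bar>"
  shows "norm (restr_analysis D (\<sigma> ` blk s a CARD('d) (Suc j)) h) powr q
         \<le> real a powr (q/2 - 1) * qnorm_q q (restr_analysis D (\<sigma> ` blk s a CARD('d) j) h)"
proof -
  define n where "n = CARD('d)"
  define x where "x = transpose D *v h"
  define P where "P = blk s a n (Suc j)"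
  define P' where "P' = blk s a n j"
  have inj: "inj_on \<sigma> {1..n}" using sort_bij unfolding n_def bij_betw_def by simp
  have Psub: "P \<subseteq> {1..n}" "P' \<subseteq> {1..n}" unfolding P_def P'_def using blk_sub by fastforce+
  have RHS0: "0 \<le> real a powr (q/2 - 1) * qnorm_q q (restr_analysis D (\<sigma> ` P') h)"
    by (simp add: qnorm_q_nonneg)
  show ?thesis
  proof (cases "P = {}")
    case True
    then show ?thesis using RHS0 unfolding P_def P'_def n_def by (simp add: rv_empty)
  next
    case False
    note bp = blk_prev[OF False[unfolded P_def] a]
    define S' where "S' = (\<Sum>p\<in>P'. \<bar>x $ \<sigma> p\<bar> powr q)"
    have S'0: "0 \<le> S'" unfolding S'_def by (simp add: sum_nonneg)
    have QS: "qnorm_q q (restr_analysis D (\<sigma> ` P') h) = S'"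
      unfolding qnorm_rv S'_def x_def using sum_reindex_sigma[OF inj[unfolded n_def] Psub(2)[unfolded n_def]]
      by (simp add: n_def)
    have pt: "\<bar>x $ \<sigma> p\<bar> powr q \<le> S' / a" if p: "p \<in> P" for p
    proof -
      have "(\<Sum>p'\<in>P'. \<bar>x $ \<sigma> p\<bar> powr q) \<le> S'"
        unfolding S'_def
      proof (rule sum_mono)
        fix p' assume p': "p' \<in> P'"
        have "p' \<le> p" using bp(3) p p' unfolding P_def P'_def by blast
        moreover have "1 \<le> p'" "p \<le> n" using Psub p p' by auto
        ultimately have "\<bar>x $ \<sigma> p\<bar> \<le> \<bar>x $ \<sigma> p'\<bar>" using sort_mono unfolding x_def n_def by blast
        then show "\<bar>x $ \<sigma> p\<bar> powr q \<le> \<bar>x $ \<sigma> p'\<bar> powr q" using q by (intro powr_mono2) auto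
      qed
      then have "real a * \<bar>x $ \<sigma> p\<bar> powr q \<le> S'" using bp(2) unfolding P'_def by simp
      then show ?thesis using a by (simp add: le_divide_eq mult.commute)
    qed
    have "(norm (restr_analysis D (\<sigma> ` P) h))^2 = (\<Sum>p\<in>P. (x $ \<sigma> p)^2)"
      unfolding norm_rv x_def using sum_reindex_sigma[OF inj[unfolded n_def] Psub(1)[unfolded n_def]]
      by (simp add: n_def)
    also have "\<dots> \<le> (\<Sum>p\<in>P. (S' / a) powr (2/q))"
    proof (rule sum_mono)
      fix p assume "p \<in> P"
      have "\<bar>x $ \<sigma> p\<bar>^2 \<le> (S' / a) powr (2/q)"
        by (rule sq_from_powr[OF q(1) _ pt[OF \<open>p \<in> P\<close>]]) simp
      then show "(x $ \<sigma> p)^2 \<le> (S' / a) powr (2/q)" by simp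
    qed
    also have "\<dots> = card P * (S' / a) powr (2/q)" by simp
    also have "\<dots> \<le> a * (S' / a) powr (2/q)"
      using blk_card[of s a n "Suc j"] unfolding P_def by (intro mult_right_mono) auto
    finally have N2: "(norm (restr_analysis D (\<sigma> ` P) h))^2 \<le> a * (S' / a) powr (2/q)" .
    have e: "(norm (restr_analysis D (\<sigma> ` P) h))^2 = norm (restr_analysis D (\<sigma> ` P) h) powr 2"
      by (intro powr2_sq[symmetric]) simp
    have "norm (restr_analysis D (\<sigma> ` P) h) powr q = ((norm (restr_analysis D (\<sigma> ` P) h))^2) powr (q/2)"
      unfolding e powr_powr by simp
    also have "\<dots> \<le> (a * (S' / a) powr (2/q)) powr (q/2)"
      using N2 q by (intro powr_mono2) auto
    also have "\<dots> = a powr (q/2) * (S' / a) powr ((2/q) * (q/2))"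
      by (simp only: powr_mult powr_powr)
    also have "(2/q) * (q/2) = 1" using q by simp
    also have "a powr (q/2) * (S' / a) powr 1 = a powr (q/2) / a * S'"
      using S'0 a by simp
    also have "a powr (q/2) / a = a powr (q/2 - 1)"
      using a by (simp add: powr_diff)
    finally show ?thesis using QS unfolding P_def P'_def n_def by simp
  qed
qed


lemma norm_powr_sq: "norm (v::'a::real_normed_vector) powr q = ((norm v)^2) powr (q/2)"
proof -
  have e: "(norm v)^2 = norm v powr 2" by (intro powr2_sq[symmetric]) simp
  show ?thesis unfolding e powr_powr by simp
qed

lemma dagger_bound_q:
  fixes D :: "real ^ 'd ^ 'n"
  assumes "is_frame D L U" "0 < L" "0 < q"
  shows "norm (dagger D *v v) powr q \<le> L powr (-q/2) * norm v powr q"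
proof -
  have "(norm (dagger D *v v))^2 \<le> (norm v)^2 / L"
    using dagger_bound[OF assms(1,2), of v] assms(2) by (simp add: le_divide_eq mult.commute)
  then have "norm (dagger D *v v) powr q \<le> ((norm v)^2 / L) powr (q/2)"
    unfolding norm_powr_sq[of "dagger D *v v"] using assms by (intro powr_mono2) auto
  also have "\<dots> = norm v powr q / L powr (q/2)"
    using powr_divide[of "(norm v)^2" L "q/2"] norm_powr_sq[of v q] by simp
  also have "\<dots> = L powr (-q/2) * norm v powr q"
  proof -
    have "L powr (-q/2) = 1 / L powr (q/2)" using powr_minus_divide[of L "q/2"] by simp
    then show ?thesis by simp
  qed
  finally show ?thesis .
qed


theorem lemma2p7:
  fixes q L U :: real
    and D :: "real ^ 'd ^ 'n"
    and A :: "real ^ 'n ^ 'm"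
    and s a :: nat
    and h :: "real ^ 'n"
    and \<sigma> :: "nat \<Rightarrow> 'd"
  assumes q: "0 < q" "q \<le> 1"
    and LU: "0 < L" "L \<le> U"
    and frame: "is_frame D L U"
    and sa: "0 < s" "s < a"
    and rip: "\<exists>\<delta>. dq_rip A D q (s + a) \<delta>"
    and sort_bij: "bij_betw \<sigma> {1..CARD('d)} UNIV"
    and sort_mono: "\<forall>i j. 1 \<le> i \<and> i \<le> j \<and> j \<le> CARD('d) \<longrightarrow>
                      \<bar>(transpose D *v h) $ \<sigma> j\<bar> \<le> \<bar>(transpose D *v h) $ \<sigma> i\<bar>"
  shows
    "let \<kappa> = U / L;
         \<delta>a = rip_const A D q a;
         \<delta>sa = rip_const A D q (s + a);
         \<Delta> = (1 + \<delta>a) / (1 - \<delta>sa);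
         T = \<sigma> ` {1..min s CARD('d)};
         T1 = \<sigma> ` {s + 1..min (s + a) CARD('d)};
         T01 = T \<union> T1
     in norm (restr_analysis D T01 h) powr q
        \<le> 2 powr (- q / 2) * (1 + sqrt (1 + 4 * \<kappa> powr (-2) * \<Delta> powr (-2 / q))) powr (q / 2)
          * \<kappa> powr q * \<Delta> * real a powr (q / 2 - 1)
          * (qnorm_q q (restr_analysis D (UNIV - T) h)
             + L powr (q / 2) * real a powr (1 - q / 2) * qnorm_q q (A *v h) / (1 + \<delta>a))"
proof -
  define n where "n = CARD('d)"
  define x where "x = transpose D *v h"
  define B where "B = blk s a n"
  define \<delta>a where "\<delta>a = rip_const A D q a"
  define \<delta>sa where "\<delta>sa = rip_const A D q (s + a)"
  define \<Delta> where "\<Delta> = (1 + \<delta>a) / (1 - \<delta>sa)"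
  define T where "T = \<sigma> ` {1..min s n}"
  define T1 where "T1 = \<sigma> ` {s + 1..min (s + a) n}"
  define S where "S j = \<sigma> ` B (Suc j)" for j
  define SR where "SR = (\<Union>j<n. S j)"
  define S01 where "S01 = T \<union> T1"
  define rv where "rv X = restr_analysis D X h" for X
  define Q where "Q v = qnorm_q q v" for v :: "real ^ 'm"
  define QTc where "QTc = qnorm_q q (rv (UNIV - T))"
  define QAh where "QAh = Q (A *v h)"
  define Lm where "Lm = L powr (-q/2)"
  define Lp where "Lp = L powr (q/2)"
  define ap where "ap = real a powr (q/2 - 1)"
  define am where "am = real a powr (1 - q/2)"
  have a0: "0 < a" using sa by simp
  have inj: "inj_on \<sigma> {1..n}" using sort_bij unfolding n_def bij_betw_def by simp
  have img: "\<sigma> ` {1..n} = UNIV" using sort_bij unfolding n_def bij_betw_def by simp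
  have Bsub: "B k \<subseteq> {1..n}" for k unfolding B_def using blk_sub by fastforce
  have T1B: "T1 = \<sigma> ` B 0" unfolding T1_def B_def blk0 ..
  have img_disj: "\<sigma> ` P \<inter> \<sigma> ` P' = {}" if "P \<subseteq> {1..n}" "P' \<subseteq> {1..n}" "P \<inter> P' = {}" for P P'
    using inj_on_image_Int[OF inj that(1,2)] that(3) by simp
  have dB: "\<sigma> ` B k \<inter> \<sigma> ` B k' = {}" if "k \<noteq> k'" for k k'
    using img_disj[OF Bsub Bsub] blk_disj[OF that] unfolding B_def by simp
  have dTB: "T \<inter> \<sigma> ` B k = {}" for k
    unfolding T_def using img_disj[OF _ Bsub, of "{1..min s n}"] blk_head_disj unfolding B_def by auto
  have dS: "S j \<inter> S j' = {}" if "j \<noteq> j'" for j j' unfolding S_def using dB that by simp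
  have d01R: "S01 \<inter> SR = {}"
    unfolding S01_def SR_def S_def T1B using dTB dB by blast
  have cov: "S01 \<union> SR = UNIV"
  proof -
    have "\<sigma> ` {1..n} \<subseteq> S01 \<union> SR"
    proof
      fix i assume "i \<in> \<sigma> ` {1..n}"
      then obtain p where p: "p \<in> {1..n}" "i = \<sigma> p" by auto
      have "p \<in> {1..min s n} \<union> B 0 \<union> (\<Union>j<n. B (Suc j))"
        using blk_cover[OF a0 p(1)] unfolding B_def by simp
      then show "i \<in> S01 \<union> SR" unfolding S01_def T_def T1B SR_def S_def using p by blast
    qed
    then show ?thesis using img by auto
  qed
  have xsplit: "x = rv S01 + rv SR"
    unfolding x_def rv_def using rv_UNIV[of D h] rv_add[OF d01R, of D h] cov by simp
  have SRsum: "rv SR = (\<Sum>j<n. rv (S j))"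
    unfolding SR_def rv_def by (rule rv_sum[symmetric]) (simp_all add: dS)
  define w where "w = dagger D *v rv S01"
  define u where "u j = dagger D *v rv (S j)" for j
  have hdec: "h = w + (\<Sum>j<n. u j)"
  proof -
    have "h = dagger D *v x" unfolding x_def using dagger_DT[OF frame LU(1)] by simp
    also have "\<dots> = w + (\<Sum>j<n. u j)"
      unfolding xsplit SRsum w_def u_def by (simp add: matrix_vector_right_distrib mv_sum)
    finally show ?thesis .
  qed
  have Adec: "A *v w = A *v h - (\<Sum>j<n. A *v u j)"
  proof -
    have "A *v h = A *v (w + (\<Sum>j<n. u j))" using hdec by (rule arg_cong)
    also have "\<dots> = A *v w + (\<Sum>j<n. A *v u j)" by (simp add: matrix_vector_right_distrib mv_sum)
    finally show ?thesis by (simp add: algebra_simps)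
  qed
  have Qw: "Q (A *v w) \<le> QAh + (\<Sum>j<n. Q (A *v u j))"
  proof -
    have "Q (A *v w) = Q (A *v h + - (\<Sum>j<n. A *v u j))" unfolding Adec by simp
    also have "\<dots> \<le> QAh + Q (- (\<Sum>j<n. A *v u j))"
      unfolding Q_def QAh_def by (rule qnorm_q_add[OF q])
    also have "Q (- (\<Sum>j<n. A *v u j)) = Q (\<Sum>j<n. A *v u j)" unfolding Q_def by (rule qnorm_q_uminus)
    also have "\<dots> \<le> (\<Sum>j<n. Q (A *v u j))" unfolding Q_def by (rule qnorm_q_sum[OF _ q]) simp
    finally show ?thesis by simp
  qed
  have ripsa: "dq_rip A D q (s + a) \<delta>sa" unfolding \<delta>sa_def by (rule rip_const_attained[OF rip])
  have ripa: "dq_rip A D q a \<delta>a" unfolding \<delta>a_def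
    using rip dq_rip_mono[of A D q "s + a" _ a] by (intro rip_const_attained) auto
  have dsa1: "\<delta>sa < 1" and da0: "0 \<le> \<delta>a" using ripsa ripa unfolding dq_rip_def by auto
  have Dp: "0 < \<Delta>" unfolding \<Delta>_def using dsa1 da0 by simp
  have cardS01: "card S01 \<le> s + a"
  proof -
    have "card S01 \<le> card T + card T1" unfolding S01_def by (rule card_Un_le)
    also have "card T \<le> s" unfolding T_def by (rule order_trans[OF card_image_le]) auto
    also have "card T1 \<le> a" unfolding T1B B_def by (rule order_trans[OF card_image_le blk_card]) (simp add: blk_def)
    finally show ?thesis by simp
  qed
  have lower: "(1 - \<delta>sa) * norm w powr q \<le> Q (A *v w)"
    using ripsa cardS01 card_rv[of D S01 h] unfolding dq_rip_def w_def Q_def rv_def by auto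
  have cardS: "card (S j) \<le> a" for j
    unfolding S_def B_def by (rule order_trans[OF card_image_le blk_card]) (simp add: blk_def)
  have upper: "Q (A *v u j) \<le> (1 + \<delta>a) * norm (u j) powr q" for j
    using ripa cardS[of j] card_rv[of D "S j" h] unfolding dq_rip_def u_def Q_def rv_def by auto
  have ubound: "norm (u j) powr q \<le> Lm * norm (rv (S j)) powr q" for j
    unfolding u_def Lm_def by (rule dagger_bound_q[OF frame LU(1) q(1)])
  have block: "norm (rv (S j)) powr q \<le> ap * qnorm_q q (rv (\<sigma> ` B j))" for j
    unfolding rv_def S_def ap_def B_def n_def by (rule block_ineq[OF q a0 sort_bij sort_mono])
  have QTcb: "(\<Sum>j<n. qnorm_q q (rv (\<sigma> ` B j))) \<le> QTc"
  proof -
    have "(\<Sum>j<n. qnorm_q q (rv (\<sigma> ` B j))) = (\<Sum>j<n. \<Sum>i\<in>\<sigma> ` B j. \<bar>x $ i\<bar> powr q)"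
      unfolding rv_def qnorm_rv x_def ..
    also have "\<dots> = (\<Sum>i\<in>(\<Union>j<n. \<sigma> ` B j). \<bar>x $ i\<bar> powr q)"
      by (rule sum.UNION_disjoint[symmetric]) (simp_all add: dB)
    also have "\<dots> \<le> (\<Sum>i\<in>UNIV - T. \<bar>x $ i\<bar> powr q)"
      using dTB by (intro sum_mono2) auto
    also have "\<dots> = QTc" unfolding QTc_def rv_def qnorm_rv x_def ..
    finally show ?thesis .
  qed
  define SB where "SB = (\<Sum>j<n. norm (rv (S j)) powr q)"
  have SBb: "SB \<le> ap * QTc"
  proof -
    have "SB \<le> (\<Sum>j<n. ap * qnorm_q q (rv (\<sigma> ` B j)))" unfolding SB_def by (intro sum_mono block)
    also have "\<dots> = ap * (\<Sum>j<n. qnorm_q q (rv (\<sigma> ` B j)))" by (simp add: sum_distrib_left)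
    also have "\<dots> \<le> ap * QTc" using QTcb by (intro mult_left_mono) (auto simp: ap_def)
    finally show ?thesis .
  qed
  have ineq1: "(1 - \<delta>sa) * norm w powr q \<le> QAh + (1 + \<delta>a) * Lm * (ap * QTc)"
  proof -
    have "(\<Sum>j<n. Q (A *v u j)) \<le> (\<Sum>j<n. (1 + \<delta>a) * Lm * norm (rv (S j)) powr q)"
    proof (rule sum_mono)
      fix j
      have "Q (A *v u j) \<le> (1 + \<delta>a) * norm (u j) powr q" by (rule upper)
      also have "\<dots> \<le> (1 + \<delta>a) * (Lm * norm (rv (S j)) powr q)"
        using ubound[of j] da0 by (intro mult_left_mono) auto
      finally show "Q (A *v u j) \<le> (1 + \<delta>a) * Lm * norm (rv (S j)) powr q" by (simp add: mult.assoc)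
    qed
    also have "\<dots> = (1 + \<delta>a) * Lm * SB" unfolding SB_def by (simp add: sum_distrib_left)
    also have "\<dots> \<le> (1 + \<delta>a) * Lm * (ap * QTc)"
      using SBb da0 by (intro mult_left_mono) (auto simp: Lm_def)
    finally show ?thesis using lower Qw by simp
  qed
  define M where "M = ap * (QTc + Lp * am * QAh / (1 + \<delta>a))"
  have QTc0: "0 \<le> QTc" and QAh0: "0 \<le> QAh" unfolding QTc_def QAh_def Q_def by (simp_all add: qnorm_q_nonneg)
  have M0: "0 \<le> M" unfolding M_def ap_def Lp_def am_def using QTc0 QAh0 da0 by simp
  have LL: "Lm * Lp = 1" unfolding Lm_def Lp_def using LU by (simp add: powr_add[symmetric])
  have aa: "ap * am = 1" unfolding ap_def am_def using a0 by (simp add: powr_add[symmetric])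
  have W: "norm w powr q \<le> \<Delta> * Lm * M"
  proof -
    have "\<Delta> * Lm * M = ((1 + \<delta>a) * Lm * (ap * QTc) + (Lm * Lp) * (ap * am) * QAh) / (1 - \<delta>sa)"
    proof -
      have d1: "1 - \<delta>sa \<noteq> 0" "1 + \<delta>a \<noteq> 0" using dsa1 da0 by auto
      have h1: "(1 + \<delta>a) * (QTc + Lp * am * QAh / (1 + \<delta>a)) = (1 + \<delta>a) * QTc + Lp * am * QAh"
        using d1 by (simp add: field_simps)
      have "\<Delta> * Lm * M = Lm * ap * ((1 + \<delta>a) * (QTc + Lp * am * QAh / (1 + \<delta>a))) / (1 - \<delta>sa)"
        unfolding \<Delta>_def M_def by (simp add: field_simps)
      also have "\<dots> = Lm * ap * ((1 + \<delta>a) * QTc + Lp * am * QAh) / (1 - \<delta>sa)" unfolding h1 ..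
      also have "\<dots> = ((1 + \<delta>a) * Lm * (ap * QTc) + (Lm * Lp) * (ap * am) * QAh) / (1 - \<delta>sa)"
        by (simp add: algebra_simps)
      finally show ?thesis .
    qed
    also have "\<dots> = (QAh + (1 + \<delta>a) * Lm * (ap * QTc)) / (1 - \<delta>sa)" using LL aa by simp
    finally have e: "\<Delta> * Lm * M = (QAh + (1 + \<delta>a) * Lm * (ap * QTc)) / (1 - \<delta>sa)" .
    show ?thesis unfolding e using ineq1 dsa1 by (simp add: le_divide_eq mult.commute)
  qed
  define R where "R = norm (rv SR)"
  have Rb: "R powr q \<le> M"
  proof -
    have "R \<le> (\<Sum>j<n. norm (rv (S j)))" unfolding R_def SRsum by (rule norm_sum)
    then have "R powr q \<le> (\<Sum>j<n. norm (rv (S j))) powr q"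
      using q by (intro powr_mono2) (auto simp: R_def)
    also have "\<dots> \<le> SB" unfolding SB_def by (rule powr_sum_le[OF _ _ q]) auto
    also have "\<dots> \<le> ap * QTc" by (rule SBb)
    also have "\<dots> \<le> M" unfolding M_def using QAh0 da0 by (intro mult_left_mono) (auto simp: ap_def Lp_def am_def)
    finally show ?thesis .
  qed
  define X where "X = norm (rv S01)"
  have quad: "X^2 \<le> sqrt U * norm w * sqrt (X^2 + R^2)"
  proof -
    have "X^2 = inner (rv S01) x" unfolding X_def rv_def x_def by (rule inner_rv[symmetric])
    also have "\<dots> = inner (D *v rv S01) h"
      unfolding x_def using inner_transpose[of h D "rv S01"] by (simp add: inner_commute)
    also have "D *v rv S01 = (D ** transpose D) *v w"
      unfolding w_def by (rule G_dagger[OF frame LU(1), symmetric])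
    also have "inner ((D ** transpose D) *v w) h = inner (transpose D *v w) x"
      unfolding x_def using inner_transpose[of h D "transpose D *v w"]
      by (simp add: inner_commute matrix_vector_mul_assoc[symmetric] del: transpose_matrix_vector)
    also have "\<dots> \<le> norm (transpose D *v w) * norm x" by (rule norm_cauchy_schwarz)
    also have "norm (transpose D *v w) \<le> sqrt U * norm w"
    proof -
      have "(norm (transpose D *v w))^2 \<le> U * (norm w)^2" using frame unfolding is_frame_def by blast
      then have "sqrt ((norm (transpose D *v w))^2) \<le> sqrt (U * (norm w)^2)" by (rule real_sqrt_le_mono)
      then show ?thesis by (simp add: real_sqrt_mult)
    qed
    then have "norm (transpose D *v w) * norm x \<le> sqrt U * norm w * norm x"
      by (intro mult_right_mono) auto
    also have "norm x = sqrt (X^2 + R^2)"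
      unfolding x_def X_def R_def rv_def using real_sqrt_unique[OF pyth_rv[OF d01R cov, of D h]] by simp
    finally show ?thesis by simp
  qed
  have fin: "X powr q \<le> 2 powr (-q/2) * (1 + sqrt (1 + 4 * (U/L) powr (-2) * \<Delta> powr (-2/q))) powr (q/2)
           * (U/L) powr q * \<Delta> * M"
    by (rule final_ineq[OF q LU Dp _ _ _ M0 quad W[unfolded Lm_def] Rb]) (auto simp: X_def R_def)
  show ?thesis
    unfolding Let_def
    using fin
    unfolding X_def M_def rv_def S01_def T_def T1_def n_def \<Delta>_def \<delta>a_def \<delta>sa_def QTc_def QAh_def Q_def
      Lp_def am_def ap_def
    by (simp only: mult.assoc)
qed

end
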